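(* Let $(X,d)$ be a metric space, $\mu$ a non-atomic Borel measure on $X$, $\beta>0$, and let $\Gamma^*\subset\Gamma^\mu$ be a family of paths closed under taking non-trivial subpaths that has the $\mu$-arc-chord property with exponent $\beta$. Let $f:X\to\mathbb R$ be continuous and $g:X\to[0,\infty]$ measurable with $|f(x)-f(y)|\le d(x,y)^\beta(g(x)+g(y))$ for all $x,y\in X$. Then there is $C>0$ such that $Cg$ is an upper gradient of $f$.
   Context: A path is a continuous map $\gamma:[a,b]\to X$; a subpath is a restriction to a subinterval, trivial if that interval is a point; $\mathrm{Im}(\gamma)=\gamma([a,b])$. $\mu$ non-atomic: $\mu(\{x\})=0$ for all $x$. $\Gamma^\mu$ is the set of all non-trivial injective paths $\gamma$ with $0<\mu(\mathrm{Im}(\tilde\gamma))<\infty$ for every non-trivial subpath $\tilde\gamma$. For Borel $g\ge0$, $\int_\gamma g:=\int_{\mathrm{Im}(\gamma)}g\,d\mu$. $\mu$-arc-chord property with exponent $\beta$: there is $C_\mu>0$ with $\mathrm{diam}(\mathrm{Im}(\gamma))^\beta\le C_\mu\,\mu(\mathrm{Im}(\gamma))$ for all $\gamma\in\Gamma^*$. A nonnegative function $\rho$ is an upper gradient of $f$ if $|f(x)-f(y)|\le\int_\gamma\rho$ for every $\gamma\in\Gamma^*$ with endpoints $x,y$. *)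

theory Defs
  imports "HOL-Analysis.Analysis"
begin

text \<open>A path is represented as a triple (a, b, gamma) with a \<le> b and gamma continuous on [a,b];
  only the values of gamma on [a,b] matter.\<close>

type_synonym 'a rpath = "real \<times> real \<times> (real \<Rightarrow> 'a)"

definition path_img :: "'a rpath \<Rightarrow> 'a set" where
  "path_img p = (case p of (a, b, \<gamma>) \<Rightarrow> \<gamma> ` {a..b})"

definition path_start :: "'a rpath \<Rightarrow> 'a" where
  "path_start p = (case p of (a, b, \<gamma>) \<Rightarrow> \<gamma> a)"

definition path_end :: "'a rpath \<Rightarrow> 'a" where
  "path_end p = (case p of (a, b, \<gamma>) \<Rightarrow> \<gamma> b)"

definition Gamma_mu :: "'a::topological_space measure \<Rightarrow> 'a rpath set" where
  "Gamma_mu M = {(a, b, \<gamma>). a < b \<and> continuous_on {a..b} \<gamma> \<and> inj_on \<gamma> {a..b} \<and>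
     (\<forall>c d. a \<le> c \<and> c < d \<and> d \<le> b \<longrightarrow>
        0 < emeasure M (\<gamma> ` {c..d}) \<and> emeasure M (\<gamma> ` {c..d}) < \<infinity>)}"

definition closed_under_subpaths :: "'a rpath set \<Rightarrow> bool" where
  "closed_under_subpaths \<Gamma> \<longleftrightarrow>
     (\<forall>a b \<gamma> c d. (a, b, \<gamma>) \<in> \<Gamma> \<and> a \<le> c \<and> c < d \<and> d \<le> b \<longrightarrow> (c, d, \<gamma>) \<in> \<Gamma>)"

definition arc_chord :: "'a::metric_space measure \<Rightarrow> real \<Rightarrow> 'a rpath set \<Rightarrow> bool" where
  "arc_chord M \<beta> \<Gamma> \<longleftrightarrow> (\<exists>C>0. \<forall>p\<in>\<Gamma>.
     ennreal (diameter (path_img p) powr \<beta>) \<le> ennreal C * emeasure M (path_img p))"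

definition path_int :: "'a measure \<Rightarrow> 'a rpath \<Rightarrow> ('a \<Rightarrow> ennreal) \<Rightarrow> ennreal" where
  "path_int M p g = set_nn_integral M (path_img p) g"

definition upper_gradient ::
  "'a measure \<Rightarrow> 'a rpath set \<Rightarrow> ('a \<Rightarrow> real) \<Rightarrow> ('a \<Rightarrow> ennreal) \<Rightarrow> bool" where
  "upper_gradient M \<Gamma> f \<rho> \<longleftrightarrow>
     (\<forall>p\<in>\<Gamma>. ennreal \<bar>f (path_start p) - f (path_end p)\<bar> \<le> path_int M p \<rho>)"

end

theory Submission
  imports Defs
begin

lemma avg_point:
  fixes M :: "'a measure" and g :: "'a \<Rightarrow> ennreal"
  assumes S: "S \<in> sets M" and pos: "0 < emeasure M S" and fin: "emeasure M S < \<infinity>"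
    and gm: "g \<in> borel_measurable M"
  shows "\<exists>x\<in>S. g x * emeasure M S \<le> set_nn_integral M S g"
proof (rule ccontr)
  define J where "J = set_nn_integral M S g"
  define m where "m = emeasure M S"
  assume "\<not> (\<exists>x\<in>S. g x * emeasure M S \<le> set_nn_integral M S g)"
  then have lt: "\<And>x. x \<in> S \<Longrightarrow> J < g x * m" by (auto simp: J_def m_def not_le)
  have Sne: "S \<noteq> {}" using pos by auto
  then obtain x0 where "x0 \<in> S" by auto
  then have Jfin: "J \<noteq> \<infinity>" using lt[of x0] by (auto simp: top_unique)
  have mfin: "m \<noteq> \<infinity>" using fin by (simp add: m_def)
  have i1: "(\<integral>\<^sup>+x. J * indicator S x \<partial>M) = J * m"
    unfolding m_def by (rule nn_integral_cmult_indicator[OF S])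
  have i2: "(\<integral>\<^sup>+x. m * (g x * indicator S x) \<partial>M) = m * J"
    unfolding J_def using S gm by (subst nn_integral_cmult) auto
  have "(\<integral>\<^sup>+x. J * indicator S x \<partial>M) < (\<integral>\<^sup>+x. m * (g x * indicator S x) \<partial>M)"
  proof (rule nn_integral_less)
    show "(\<lambda>x. J * indicator S x) \<in> borel_measurable M" using S by measurable
    show "(\<lambda>x. m * (g x * indicator S x)) \<in> borel_measurable M" using S gm by measurable
    show "(\<integral>\<^sup>+x. J * indicator S x \<partial>M) \<noteq> \<infinity>" using i1 Jfin mfin
      by (simp add: ennreal_mult_eq_top_iff)
    show "AE x in M. J * indicator S x \<le> m * (g x * indicator S x)"
    proof (rule AE_I2)
      fix x show "J * indicator S x \<le> m * (g x * indicator S x)"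
      proof (cases "x \<in> S")
        case True
        then have "J \<le> g x * m" using lt less_imp_le by blast
        moreover have "indicator S x = (1::ennreal)" using True by simp
        ultimately show ?thesis by (simp add: mult.commute)
      qed simp
    qed
    show "\<not> (AE x in M. m * (g x * indicator S x) \<le> J * indicator S x)"
    proof
      assume aeH: "AE x in M. m * (g x * indicator S x) \<le> J * indicator S x"
      have eqS: "{x\<in>space M. \<not> (m * (g x * indicator S x) \<le> J * indicator S x)} = S"
      proof (intro set_eqI iffI)
        fix x assume "x \<in> {x\<in>space M. \<not> (m * (g x * indicator S x) \<le> J * indicator S x)}"
        then show "x \<in> S" by (cases "x \<in> S") simp_all
      next
        fix x assume x: "x \<in> S"
        then have "J < g x * m" by (rule lt)
        then show "x \<in> {x\<in>space M. \<not> (m * (g x * indicator S x) \<le> J * indicator S x)}"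
        proof -
          have xs: "x \<in> space M" using x sets.sets_into_space[OF S] by blast
          have "indicator S x = (1::ennreal)" using x by simp
          then show ?thesis using \<open>J < g x * m\<close> xs by (simp add: mult.commute not_le)
        qed
      qed
      have "emeasure M S = 0" by (rule iffD1[OF AE_iff_measurable[OF S eqS] aeH])
      then show False using pos by simp
    qed
  qed
  then show False using i1 i2 by (simp add: mult.commute)
qed

lemma pair_bound:
  fixes M :: "'a::metric_space measure" and g :: "'a \<Rightarrow> ennreal"
  assumes beta: "\<beta> > 0" and closed: "closed_under_subpaths \<Gamma>"
    and acC: "\<forall>p\<in>\<Gamma>. ennreal (diameter (path_img p) powr \<beta>) \<le> ennreal C0 * emeasure M (path_img p)"
    and hyp: "\<And>x y. ennreal \<bar>f x - f y\<bar> \<le> ennreal (dist x y powr \<beta>) * (g x + g y)"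
    and p: "(a,b,\<gamma>) \<in> \<Gamma>" and uv: "a \<le> u" "u < v" "v \<le> b"
    and cont: "continuous_on {a..b} \<gamma>"
  shows "ennreal \<bar>f (\<gamma> u) - f (\<gamma> v)\<bar> \<le> ennreal C0 * emeasure M (\<gamma>`{u..v}) * (g (\<gamma> u) + g (\<gamma> v))"
proof -
  have pv: "(u,v,\<gamma>) \<in> \<Gamma>" using closed p uv unfolding closed_under_subpaths_def by blast
  have "compact (\<gamma>`{u..v})"
    by (rule compact_continuous_image[OF continuous_on_subset[OF cont]]) (use uv in auto)
  then have bnd: "bounded (\<gamma>`{u..v})" by (rule compact_imp_bounded)
  have d: "dist (\<gamma> u) (\<gamma> v) \<le> diameter (\<gamma>`{u..v})"
    by (rule diameter_bounded_bound[OF bnd]) (use uv in auto)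
  have d2: "dist (\<gamma> u) (\<gamma> v) powr \<beta> \<le> diameter (\<gamma>`{u..v}) powr \<beta>"
    by (rule powr_mono2) (use beta d in auto)
  have ac1: "ennreal (diameter (\<gamma>`{u..v}) powr \<beta>) \<le> ennreal C0 * emeasure M (\<gamma>`{u..v})"
  proof -
    have "ennreal (diameter (path_img (u,v,\<gamma>)) powr \<beta>) \<le> ennreal C0 * emeasure M (path_img (u,v,\<gamma>))"
      using acC pv by blast
    moreover have "path_img (u,v,\<gamma>) = \<gamma>`{u..v}" by (simp add: path_img_def)
    ultimately show ?thesis by simp
  qed
  have "ennreal \<bar>f (\<gamma> u) - f (\<gamma> v)\<bar> \<le> ennreal (dist (\<gamma> u) (\<gamma> v) powr \<beta>) * (g (\<gamma> u) + g (\<gamma> v))"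
    by (rule hyp)
  also have "\<dots> \<le> ennreal (diameter (\<gamma>`{u..v}) powr \<beta>) * (g (\<gamma> u) + g (\<gamma> v))"
    by (rule mult_right_mono[OF ennreal_leI[OF d2]]) simp
  also have "\<dots> \<le> ennreal C0 * emeasure M (\<gamma>`{u..v}) * (g (\<gamma> u) + g (\<gamma> v))"
    by (rule mult_right_mono[OF ac1]) simp
  finally show ?thesis .
qed

lemma telescope:
  fixes F :: "nat \<Rightarrow> real"
  shows "\<bar>F 0 - F n\<bar> \<le> (\<Sum>i<n. \<bar>F i - F (Suc i)\<bar>)"
proof (induction n)
  case 0 then show ?case by simp
next
  case (Suc n)
  have "\<bar>F 0 - F (Suc n)\<bar> \<le> \<bar>F 0 - F n\<bar> + \<bar>F n - F (Suc n)\<bar>" by linarith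
  moreover have "(\<Sum>i<Suc n. \<bar>F i - F (Suc i)\<bar>) = (\<Sum>i<n. \<bar>F i - F (Suc i)\<bar>) + \<bar>F n - F (Suc n)\<bar>"
    by simp
  ultimately show ?case using Suc.IH by linarith
qed


lemma Icc_shrink:
  fixes p q a b t :: real
  assumes "p \<le> q" shows "{max a (t - p)..min b (t + p)} \<subseteq> {max a (t - q)..min b (t + q)}"
  using assms by auto

lemma path_bound:
  fixes M :: "'a::metric_space measure" and g :: "'a \<Rightarrow> ennreal" and f :: "'a \<Rightarrow> real"
  assumes borel: "sets M = sets borel"
    and nonatomic: "\<And>x. emeasure M {x} = 0"
    and beta: "\<beta> > 0"
    and sub: "\<Gamma> \<subseteq> Gamma_mu M"
    and closed: "closed_under_subpaths \<Gamma>"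
    and C0: "C0 > 0"
    and acC: "\<forall>p\<in>\<Gamma>. ennreal (diameter (path_img p) powr \<beta>) \<le> ennreal C0 * emeasure M (path_img p)"
    and fcont: "continuous_on UNIV f"
    and gmeas: "g \<in> borel_measurable M"
    and hyp: "\<And>x y. ennreal \<bar>f x - f y\<bar> \<le> ennreal (dist x y powr \<beta>) * (g x + g y)"
    and p: "(a,b,\<gamma>) \<in> \<Gamma>"
  shows "ennreal \<bar>f (\<gamma> a) - f (\<gamma> b)\<bar> \<le> ennreal (4*C0) * set_nn_integral M (\<gamma>`{a..b}) g"
proof -
  from p sub have gm: "(a,b,\<gamma>) \<in> Gamma_mu M" by blast
  then have ab: "a < b" and cont: "continuous_on {a..b} \<gamma>" and inj: "inj_on \<gamma> {a..b}"
    and posm: "\<And>c d. a \<le> c \<Longrightarrow> c < d \<Longrightarrow> d \<le> b \<Longrightarrow> 0 < emeasure M (\<gamma>`{c..d})"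
    and finm: "\<And>c d. a \<le> c \<Longrightarrow> c < d \<Longrightarrow> d \<le> b \<Longrightarrow> emeasure M (\<gamma>`{c..d}) < \<infinity>"
    unfolding Gamma_mu_def by auto
  have meas: "\<gamma>`{u..v} \<in> sets M" if "a \<le> u" "v \<le> b" for u v
  proof -
    have "compact (\<gamma>`{u..v})" using that
      by (intro compact_continuous_image continuous_on_subset[OF cont]) auto
    then have "closed (\<gamma>`{u..v})" by (rule compact_imp_closed)
    then show "\<gamma>`{u..v} \<in> sets M" unfolding borel by (rule borel_closed)
  qed
  have singm: "{x} \<in> sets M" for x unfolding borel by (rule borel_closed[OF closed_singleton])
  have singn: "{x} \<in> null_sets M" for x using singm nonatomic by blast
  have fin: "emeasure M (\<gamma>`{u..v}) < \<infinity>" if "a \<le> u" "v \<le> b" for u v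
  proof -
    have "emeasure M (\<gamma>`{u..v}) \<le> emeasure M (\<gamma>`{a..b})"
      by (rule emeasure_mono) (use that meas[of a b] ab in auto)
    then show ?thesis using finm[of a b] ab by auto
  qed
  have add: "emeasure M (\<gamma>`{a..v}) = emeasure M (\<gamma>`{a..u}) + emeasure M (\<gamma>`{u..v})"
    if uv: "a \<le> u" "u \<le> v" "v \<le> b" for u v
  proof -
    have e1: "\<gamma>`{a..v} \<subseteq> \<gamma>`{a..u} \<union> (\<gamma>`{u..v} - {\<gamma> u})"
    proof
      fix y assume "y \<in> \<gamma>`{a..v}"
      then obtain x where x: "x \<in> {a..v}" "y = \<gamma> x" by auto
      show "y \<in> \<gamma>`{a..u} \<union> (\<gamma>`{u..v} - {\<gamma> u})"
      proof (cases "x \<le> u")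
        case True then show ?thesis using x by auto
      next
        case False
        have "\<gamma> x \<noteq> \<gamma> u"
        proof
          assume "\<gamma> x = \<gamma> u"
          then have "x = u" by (rule inj_onD[OF inj]) (use x uv in auto)
          then show False using False by simp
        qed
        then show ?thesis using x False by auto
      qed
    qed
    have e2: "\<gamma>`{a..u} \<union> (\<gamma>`{u..v} - {\<gamma> u}) \<subseteq> \<gamma>`{a..v}" using uv by auto
    have disj: "\<gamma>`{a..u} \<inter> (\<gamma>`{u..v} - {\<gamma> u}) = {}"
    proof (rule ccontr)
      assume "\<gamma>`{a..u} \<inter> (\<gamma>`{u..v} - {\<gamma> u}) \<noteq> {}"
      then obtain y where y: "y \<in> \<gamma>`{a..u}" "y \<in> \<gamma>`{u..v}" "y \<noteq> \<gamma> u" by blast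
      from y(1) obtain x1 where x1: "x1 \<in> {a..u}" "y = \<gamma> x1" by auto
      from y(2) obtain x2 where x2: "x2 \<in> {u..v}" "y = \<gamma> x2" by auto
      have x: "x1 \<in> {a..u}" "x2 \<in> {u..v}" "\<gamma> x1 = \<gamma> x2" "\<gamma> x2 \<noteq> \<gamma> u"
        using x1 x2 y by auto
      then have "x1 = x2" by (intro inj_onD[OF inj]) (use uv in auto)
      then have "x2 = u" using x by auto
      then show False using x by simp
    qed
    have "emeasure M (\<gamma>`{u..v} - {\<gamma> u}) = emeasure M (\<gamma>`{u..v})"
      by (rule emeasure_Diff_null_set[OF singn meas]) (use uv in auto)
    moreover have "emeasure M (\<gamma>`{a..u}) + emeasure M (\<gamma>`{u..v} - {\<gamma> u})
        = emeasure M (\<gamma>`{a..u} \<union> (\<gamma>`{u..v} - {\<gamma> u}))"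
      by (rule plus_emeasure[OF _ _ disj]) (use uv meas singm in auto)
    moreover have "\<gamma>`{a..u} \<union> (\<gamma>`{u..v} - {\<gamma> u}) = \<gamma>`{a..v}" using e1 e2 by blast
    ultimately show ?thesis by simp
  qed
  define \<Phi> where "\<Phi> t = enn2real (emeasure M (\<gamma>`{a..t}))" for t
  have \<Phi>nn: "0 \<le> \<Phi> t" for t unfolding \<Phi>_def by simp
  have \<Phi>e: "emeasure M (\<gamma>`{a..t}) = ennreal (\<Phi> t)" if "a \<le> t" "t \<le> b" for t
    unfolding \<Phi>_def using fin[of a t] that by simp
  have mono: "\<Phi> u \<le> \<Phi> v" if "a \<le> u" "u \<le> v" "v \<le> b" for u v
  proof -
    have "emeasure M (\<gamma>`{a..u}) \<le> emeasure M (\<gamma>`{a..v})"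
      by (rule emeasure_mono) (use that meas[of a v] in auto)
    then show ?thesis using \<Phi>e[of u] \<Phi>e[of v] that \<Phi>nn[of v] by simp
  qed
  have seg: "emeasure M (\<gamma>`{u..v}) = ennreal (\<Phi> v - \<Phi> u)" if uv: "a \<le> u" "u \<le> v" "v \<le> b" for u v
  proof -
    define X where "X = emeasure M (\<gamma>`{u..v})"
    have Xf: "X < \<infinity>" unfolding X_def using fin uv by auto
    define x where "x = enn2real X"
    have Xx: "X = ennreal x" unfolding x_def using Xf by simp
    have x0: "0 \<le> x" unfolding x_def by simp
    have "ennreal (\<Phi> v) = ennreal (\<Phi> u) + ennreal x"
      using add[OF uv] \<Phi>e[of u] \<Phi>e[of v] uv Xx X_def by simp
    also have "\<dots> = ennreal (\<Phi> u + x)" using x0 \<Phi>nn by simp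
    finally have "\<Phi> v = \<Phi> u + x" using x0 \<Phi>nn[of u] \<Phi>nn[of v]
      by (subst (asm) ennreal_inj) auto
    then show ?thesis using Xx X_def by simp
  qed
  have \<Phi>a: "\<Phi> a = 0" unfolding \<Phi>_def using nonatomic[of "\<gamma> a"] by simp
  have strict: "\<Phi> u < \<Phi> v" if "a \<le> u" "u < v" "v \<le> b" for u v
  proof -
    have "0 < emeasure M (\<gamma>`{u..v})" by (rule posm) (use that in auto)
    then show ?thesis using seg[of u v] that by simp
  qed
  have \<Phi>cont: "continuous_on {a..b} \<Phi>"
    unfolding continuous_on_iff
  proof (intro ballI allI impI)
    fix t \<epsilon> :: real assume t: "t \<in> {a..b}" and e: "0 < \<epsilon>"
    define A where "A k = \<gamma>`{max a (t - inverse (real (Suc k))) .. min b (t + inverse (real (Suc k)))}" for k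
    have Ameas: "range A \<subseteq> sets M" unfolding A_def using meas by auto
    have Adec: "decseq A" unfolding decseq_def
    proof (intro allI impI)
      fix k l :: nat assume "k \<le> l"
      then have il: "inverse (real (Suc l)) \<le> inverse (real (Suc k))" by (simp add: le_imp_inverse_le)
      show "A l \<subseteq> A k" unfolding A_def by (rule image_mono[OF Icc_shrink[OF il]])
    qed
    have Afin: "emeasure M (A k) \<noteq> \<infinity>" for k
    proof -
      have "emeasure M (A k) < \<infinity>" unfolding A_def by (rule fin) auto
      then show ?thesis by simp
    qed
    have Aint: "(\<Inter>k. A k) = {\<gamma> t}"
    proof (intro equalityI subsetI)
      fix y assume y: "y \<in> (\<Inter>k. A k)"
      then have "y \<in> A 0" by blast
      then obtain s where s: "s \<in> {a..b}" "y = \<gamma> s" unfolding A_def by auto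
      have close: "\<bar>s - t\<bar> \<le> inverse (real (Suc k))" for k
      proof -
        from y have "y \<in> A k" by blast
        then obtain s' where s': "s' \<in> {max a (t - inverse (real (Suc k))) .. min b (t + inverse (real (Suc k)))}" "y = \<gamma> s'"
          unfolding A_def by auto
        have "s' = s" by (rule inj_onD[OF inj]) (use s s' in auto)
        then show ?thesis using s' by auto
      qed
      have "s = t"
      proof (rule ccontr)
        assume "s \<noteq> t"
        then have "0 < \<bar>s - t\<bar>" by simp
        from ex_inverse_of_nat_less[OF this] obtain n :: nat where n: "n > 0" "inverse (real n) < \<bar>s - t\<bar>" by auto
        then obtain k where "n = Suc k" using gr0_implies_Suc by blast
        then show False using close[of k] n by simp
      qed
      then show "y \<in> {\<gamma> t}" using s by simp
    next
      fix y assume "y \<in> {\<gamma> t}"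
      then show "y \<in> (\<Inter>k. A k)" unfolding A_def using t by auto
    qed
    have "(\<lambda>k. emeasure M (A k)) \<longlonglongrightarrow> emeasure M {\<gamma> t}"
      using Lim_emeasure_decseq[OF Ameas Adec Afin] Aint by simp
    then have "(\<lambda>k. emeasure M (A k)) \<longlonglongrightarrow> 0" using nonatomic by simp
    moreover have "(0::ennreal) < ennreal \<epsilon>" using e by simp
    ultimately have "eventually (\<lambda>k. emeasure M (A k) < ennreal \<epsilon>) sequentially"
      by (rule order_tendstoD(2))
    then obtain k where k: "emeasure M (A k) < ennreal \<epsilon>" by (auto simp: eventually_sequentially)
    show "\<exists>\<delta>>0. \<forall>s\<in>{a..b}. dist s t < \<delta> \<longrightarrow> dist (\<Phi> s) (\<Phi> t) < \<epsilon>"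
    proof (intro exI[of _ "inverse (real (Suc k))"] conjI ballI impI)
      show "0 < inverse (real (Suc k))" by simp
      fix s assume s: "s \<in> {a..b}" and ds: "dist s t < inverse (real (Suc k))"
      define lo where "lo = min s t"
      define hi where "hi = max s t"
      have lohi: "a \<le> lo" "lo \<le> hi" "hi \<le> b" using s t unfolding lo_def hi_def by auto
      have "\<gamma>`{lo..hi} \<subseteq> A k" unfolding A_def lo_def hi_def
        by (rule image_mono) (use s t ds in \<open>auto simp: dist_real_def\<close>)
      then have "emeasure M (\<gamma>`{lo..hi}) \<le> emeasure M (A k)"
        by (intro emeasure_mono) (use Ameas in auto)
      then have "ennreal (\<Phi> hi - \<Phi> lo) < ennreal \<epsilon>" using seg[OF lohi] k by simp
      then have "\<Phi> hi - \<Phi> lo < \<epsilon>" using mono[OF lohi] by (simp add: ennreal_less_iff)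
      moreover have "dist (\<Phi> s) (\<Phi> t) = \<Phi> hi - \<Phi> lo"
        using mono[of s t] mono[of t s] s t unfolding lo_def hi_def dist_real_def
        by (cases "s \<le> t") (auto simp: max_def min_def)
      ultimately show "dist (\<Phi> s) (\<Phi> t) < \<epsilon>" by simp
    qed
  qed
  define L where "L = \<Phi> b"
  have Lpos: "0 < L" unfolding L_def using strict[of a b] ab \<Phi>a by simp
  define I where "I = set_nn_integral M (\<gamma>`{a..b}) g"
  show ?thesis
  proof (cases "I = \<infinity>")
    case True
    then show ?thesis using C0 by (simp add: I_def ennreal_mult_top)
  next
    case False
    define R where "R = enn2real (ennreal (4*C0) * I)"
    have RR: "ennreal R = ennreal (4*C0) * I" unfolding R_def using False
      by (simp add: ennreal_mult_less_top less_top)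
    have R0: "0 \<le> R" unfolding R_def by simp
    have chain: "\<exists>s0 s1. s0 \<in> {a..b} \<and> s1 \<in> {a..b} \<and> \<Phi> s0 \<le> L / n \<and> L - L / n \<le> \<Phi> s1 \<and>
        ennreal \<bar>f (\<gamma> s0) - f (\<gamma> s1)\<bar> \<le> ennreal (4*C0) * I" if n: "n \<ge> 1" for n :: nat
    proof -
      define m where "m = L / real n"
      have m0: "0 < m" unfolding m_def using Lpos n by simp
      have nm: "real n * m = L" unfolding m_def using n by simp
      have "\<forall>i. \<exists>x. i \<le> n \<longrightarrow> x \<in> {a..b} \<and> \<Phi> x = real i * m"
      proof
        fix i show "\<exists>x. i \<le> n \<longrightarrow> x \<in> {a..b} \<and> \<Phi> x = real i * m"
        proof (cases "i \<le> n")
          case True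
          have "real i * m \<le> real n * m" using True m0 by (simp add: mult_right_mono)
          then have "\<Phi> a \<le> real i * m" "real i * m \<le> \<Phi> b" using \<Phi>a nm m0 L_def by auto
          from IVT'[OF this less_imp_le[OF ab] \<Phi>cont] show ?thesis by auto
        qed simp
      qed
      then obtain t where t: "\<And>i. i \<le> n \<Longrightarrow> t i \<in> {a..b} \<and> \<Phi> (t i) = real i * m"
        by metis
      have tlt: "t i < t j" if "i < j" "j \<le> n" for i j
      proof (rule ccontr)
        assume "\<not> t i < t j"
        then have "\<Phi> (t j) \<le> \<Phi> (t i)" using mono[of "t j" "t i"] t[of i] t[of j] that by auto
        moreover have "real i * m < real j * m" using that m0 by simp
        ultimately show False using t[of i] t[of j] that by simp
      qed
      have tle: "t i \<le> t j" if "i \<le> j" "j \<le> n" for i j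
        using tlt[of i j] that by (cases "i = j") auto
      define Q where "Q i = \<gamma>`{t i..<t (Suc i)}" for i
      have Qeq: "Q i = \<gamma>`{t i..t (Suc i)} - {\<gamma> (t (Suc i))}" if i: "i < n" for i
      proof (intro equalityI subsetI)
        fix y assume "y \<in> Q i"
        then obtain x where x: "x \<in> {t i..<t (Suc i)}" "y = \<gamma> x" unfolding Q_def by auto
        have "\<gamma> x \<noteq> \<gamma> (t (Suc i))"
        proof
          assume "\<gamma> x = \<gamma> (t (Suc i))"
          then have "x = t (Suc i)"
            by (rule inj_onD[OF inj]) (use x t[of i] t[of "Suc i"] i in auto)
          then show False using x by simp
        qed
        then show "y \<in> \<gamma>`{t i..t (Suc i)} - {\<gamma> (t (Suc i))}" using x by auto
      next
        fix y assume "y \<in> \<gamma>`{t i..t (Suc i)} - {\<gamma> (t (Suc i))}"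
        then obtain x where x: "x \<in> {t i..t (Suc i)}" "y = \<gamma> x" "\<gamma> x \<noteq> \<gamma> (t (Suc i))" by auto
        then have "x \<noteq> t (Suc i)" by auto
        then show "y \<in> Q i" using x unfolding Q_def by auto
      qed
      have tin: "a \<le> t i" "t i \<le> b" if "i \<le> n" for i using t[OF that] by auto
      have Qmeas: "Q i \<in> sets M" if i: "i < n" for i
        unfolding Qeq[OF i] using meas[of "t i" "t (Suc i)"] tin[of i] tin[of "Suc i"] i singm by auto
      have Qmu: "emeasure M (Q i) = ennreal m" if i: "i < n" for i
      proof -
        have "emeasure M (Q i) = emeasure M (\<gamma>`{t i..t (Suc i)})"
          unfolding Qeq[OF i] by (rule emeasure_Diff_null_set[OF singn meas]) (use tin[of i] tin[of "Suc i"] i in auto)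
        also have "\<dots> = ennreal (\<Phi> (t (Suc i)) - \<Phi> (t i))"
          by (rule seg) (use tin[of i] tin[of "Suc i"] i tle[of i "Suc i"] in auto)
        also have "\<Phi> (t (Suc i)) - \<Phi> (t i) = m" using t[of i] t[of "Suc i"] i by (simp add: algebra_simps)
        finally show ?thesis .
      qed
      define J where "J i = set_nn_integral M (Q i) g" for i
      have "\<forall>i. \<exists>x. i < n \<longrightarrow> x \<in> {t i..<t (Suc i)} \<and> g (\<gamma> x) * ennreal m \<le> J i"
      proof
        fix i show "\<exists>x. i < n \<longrightarrow> x \<in> {t i..<t (Suc i)} \<and> g (\<gamma> x) * ennreal m \<le> J i"
        proof (cases "i < n")
          case True
          have "\<exists>y\<in>Q i. g y * emeasure M (Q i) \<le> set_nn_integral M (Q i) g"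
            by (rule avg_point[OF Qmeas[OF True] _ _ gmeas]) (use Qmu[OF True] m0 in auto)
          then obtain y where y: "y \<in> Q i" "g y * ennreal m \<le> J i" using Qmu[OF True] unfolding J_def by auto
          then obtain x where "x \<in> {t i..<t (Suc i)}" "y = \<gamma> x" unfolding Q_def by auto
          then show ?thesis using y by auto
        qed simp
      qed
      then obtain s where s: "\<And>i. i < n \<Longrightarrow> s i \<in> {t i..<t (Suc i)} \<and> g (\<gamma> (s i)) * ennreal m \<le> J i"
        by metis
      have sin: "s i \<in> {a..b}" if "i < n" for i using s[OF that] tin[of i] tin[of "Suc i"] that by auto
      have disj: "x \<notin> Q j" if ij: "i < n" "j < n" "i \<noteq> j" "x \<in> Q i" for i j x
      proof
        assume "x \<in> Q j"
        then obtain v where v: "v \<in> {t j..<t (Suc j)}" "x = \<gamma> v" unfolding Q_def by auto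
        from ij(4) obtain u where u: "u \<in> {t i..<t (Suc i)}" "x = \<gamma> u" unfolding Q_def by auto
        have "u = v" by (rule inj_onD[OF inj]) (use u v tin[of i] tin[of "Suc i"] tin[of j] tin[of "Suc j"] ij in auto)
        show False
        proof (cases "i < j")
          case True
          then have "t (Suc i) \<le> t j" using tle[of "Suc i" j] ij by auto
          then show False using u v \<open>u = v\<close> by auto
        next
          case False
          then have "t (Suc j) \<le> t i" using tle[of "Suc j" i] ij by auto
          then show False using u v \<open>u = v\<close> by auto
        qed
      qed
      have Qsub: "Q i \<subseteq> \<gamma>`{a..b}" if "i < n" for i
        unfolding Q_def using tin[of i] tin[of "Suc i"] that by (intro image_mono) auto
      have sumJ: "(\<Sum>i<n. J i) \<le> I"
      proof -
        have "(\<Sum>i<n. J i) = (\<integral>\<^sup>+x. (\<Sum>i<n. g x * indicator (Q i) x) \<partial>M)"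
          unfolding J_def
        proof (rule nn_integral_sum[symmetric])
          fix i assume "i \<in> {..<n}"
          then have "Q i \<in> sets M" using Qmeas by simp
          then show "(\<lambda>x. g x * indicator (Q i) x) \<in> borel_measurable M" using gmeas by measurable
        qed
        also have "\<dots> \<le> (\<integral>\<^sup>+x. g x * indicator (\<gamma>`{a..b}) x \<partial>M)"
        proof (rule nn_integral_mono)
          fix x
          show "(\<Sum>i<n. g x * indicator (Q i) x) \<le> g x * indicator (\<gamma>`{a..b}) x"
          proof (cases "\<exists>j<n. x \<in> Q j")
            case True
            then obtain j where j: "j < n" "x \<in> Q j" by auto
            have "(\<Sum>i<n. g x * indicator (Q i) x) = g x * indicator (Q j) x + (\<Sum>i\<in>{..<n} - {j}. g x * indicator (Q i) x)"
              by (rule sum.remove) (use j in auto)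
            also have "(\<Sum>i\<in>{..<n} - {j}. g x * indicator (Q i) x) = 0"
              by (rule sum.neutral) (use disj[of j _ x] j in auto)
            also have "g x * indicator (Q j) x + 0 = g x * indicator (\<gamma>`{a..b}) x"
              using j Qsub[of j] by auto
            finally show ?thesis by simp
          next
            case False
            have "(\<Sum>i<n. g x * indicator (Q i) x) = 0" by (rule sum.neutral) (use False in auto)
            then show ?thesis by (metis zero_le)
          qed
        qed
        finally show ?thesis unfolding I_def by simp
      qed
      have step: "ennreal \<bar>f (\<gamma> (s i)) - f (\<gamma> (s (Suc i)))\<bar> \<le> ennreal (2*C0) * (J i + J (Suc i))"
        if i: "Suc i < n" for i
      proof -
        have si: "s i \<in> {t i..<t (Suc i)}" "g (\<gamma> (s i)) * ennreal m \<le> J i" using s[of i] i by auto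
        have si1: "s (Suc i) \<in> {t (Suc i)..<t (Suc (Suc i))}" "g (\<gamma> (s (Suc i))) * ennreal m \<le> J (Suc i)"
          using s[of "Suc i"] i by auto
        have uv: "s i < s (Suc i)" using si(1) si1(1) by auto
        have ta: "a \<le> t i" and tb: "t (Suc (Suc i)) \<le> b" using tin[of i] tin[of "Suc (Suc i)"] i by auto
        have "ennreal \<bar>f (\<gamma> (s i)) - f (\<gamma> (s (Suc i)))\<bar>
            \<le> ennreal C0 * emeasure M (\<gamma>`{s i..s (Suc i)}) * (g (\<gamma> (s i)) + g (\<gamma> (s (Suc i))))"
          by (rule pair_bound[OF beta closed acC hyp p _ uv _ cont]) (use si si1 ta tb in auto)
        also have "\<dots> \<le> ennreal C0 * ennreal (2*m) * (g (\<gamma> (s i)) + g (\<gamma> (s (Suc i))))"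
        proof -
          have "emeasure M (\<gamma>`{s i..s (Suc i)}) \<le> emeasure M (\<gamma>`{t i..t (Suc (Suc i))})"
            by (rule emeasure_mono) (use si si1 meas[OF ta tb] in auto)
          also have "\<dots> = ennreal (\<Phi> (t (Suc (Suc i))) - \<Phi> (t i))"
            by (rule seg[OF ta _ tb]) (use tle[of i "Suc (Suc i)"] i in auto)
          also have "\<Phi> (t (Suc (Suc i))) - \<Phi> (t i) = 2*m" using t[of i] t[of "Suc (Suc i)"] i
            by (simp add: algebra_simps)
          finally have "emeasure M (\<gamma>`{s i..s (Suc i)}) \<le> ennreal (2*m)" .
          then show ?thesis by (intro mult_right_mono mult_left_mono) auto
        qed
        also have "\<dots> = ennreal (2*C0) * (g (\<gamma> (s i)) * ennreal m + g (\<gamma> (s (Suc i))) * ennreal m)"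
        proof -
          have "ennreal C0 * ennreal (2*m) = ennreal (2*C0) * ennreal m"
            using C0 m0 by (simp add: ennreal_mult[symmetric] mult_ac)
          then show ?thesis by (simp add: distrib_left distrib_right mult_ac)
        qed
        also have "\<dots> \<le> ennreal (2*C0) * (J i + J (Suc i))"
          by (intro mult_left_mono add_mono si(2) si1(2)) auto
        finally show ?thesis .
      qed
      define D where "D i = \<bar>f (\<gamma> (s i)) - f (\<gamma> (s (Suc i)))\<bar>" for i
      have tel: "\<bar>f (\<gamma> (s 0)) - f (\<gamma> (s (n - 1)))\<bar> \<le> (\<Sum>i<n-1. D i)"
        unfolding D_def by (rule telescope[of "\<lambda>i. f (\<gamma> (s i))"])
      have "ennreal \<bar>f (\<gamma> (s 0)) - f (\<gamma> (s (n - 1)))\<bar> \<le> ennreal (\<Sum>i<n-1. D i)"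
        using tel by (rule ennreal_leI)
      also have "\<dots> = (\<Sum>i<n-1. ennreal (D i))" unfolding D_def by (rule sum_ennreal[symmetric]) simp
      also have "\<dots> \<le> (\<Sum>i<n-1. ennreal (2*C0) * (J i + J (Suc i)))"
        unfolding D_def by (rule sum_mono) (use step in auto)
      also have "\<dots> = ennreal (2*C0) * ((\<Sum>i<n-1. J i) + (\<Sum>i<n-1. J (Suc i)))"
        by (simp add: sum_distrib_left sum.distrib distrib_left)
      also have "\<dots> \<le> ennreal (2*C0) * (I + I)"
      proof -
        have a1: "(\<Sum>i<n-1. J i) \<le> (\<Sum>i<n. J i)" by (rule sum_mono2) auto
        have "(\<Sum>i<n-1. J (Suc i)) = sum J (Suc ` {..<n-1})" by (simp add: sum.reindex)
        also have "\<dots> \<le> (\<Sum>i<n. J i)" by (rule sum_mono2) auto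
        finally have a2: "(\<Sum>i<n-1. J (Suc i)) \<le> (\<Sum>i<n. J i)" .
        show ?thesis using a1 a2 sumJ by (intro mult_left_mono add_mono) (auto intro: order_trans)
      qed
      also have "\<dots> = ennreal (4*C0) * I"
      proof -
        have "ennreal (4*C0) = ennreal ((2*C0) * 2)" by simp
        also have "\<dots> = ennreal (2*C0) * ennreal 2" by (rule ennreal_mult) (use C0 in auto)
        finally have "ennreal (4*C0) = ennreal (2*C0) * 2" by simp
        then show ?thesis by (simp add: mult_2_right[symmetric] mult_ac)
      qed
      finally have fin1: "ennreal \<bar>f (\<gamma> (s 0)) - f (\<gamma> (s (n - 1)))\<bar> \<le> ennreal (4*C0) * I" .
      have s0: "s 0 \<in> {a..b}" using sin[of 0] n by auto
      have s1: "s (n-1) \<in> {a..b}" using sin[of "n-1"] n by auto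
      have "\<Phi> (s 0) \<le> \<Phi> (t 1)"
        using mono[of "s 0" "t 1"] s[of 0] s0 tin[of 1] n by auto
      also have "\<Phi> (t 1) = L / real n" using t[of 1] n m_def by simp
      finally have p0: "\<Phi> (s 0) \<le> L / real n" .
      have "\<Phi> (t (n-1)) \<le> \<Phi> (s (n-1))"
        using mono[of "t (n-1)" "s (n-1)"] s[of "n-1"] s1 tin[of "n-1"] n by auto
      moreover have "\<Phi> (t (n-1)) = L - L / real n"
      proof -
        have "\<Phi> (t (n-1)) = real (n-1) * m" using t[of "n-1"] by simp
        also have "real (n-1) = real n - 1" using n by (simp add: of_nat_diff)
        also have "(real n - 1) * m = real n * m - m" by (simp add: algebra_simps)
        also have "\<dots> = L - L / real n" using nm by (simp add: m_def)
        finally show ?thesis .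
      qed
      ultimately have p1: "L - L / real n \<le> \<Phi> (s (n-1))" by simp
      show ?thesis using s0 s1 p0 p1 fin1 by blast
    qed
    have Fc: "continuous_on {a..b} (\<lambda>s. f (\<gamma> s))"
      using continuous_on_compose[OF cont continuous_on_subset[OF fcont]] by (simp add: o_def)
    have main: "\<bar>f (\<gamma> a) - f (\<gamma> b)\<bar> \<le> R"
    proof (rule field_le_epsilon)
      fix e :: real assume e: "0 < e"
      have "e/2 > 0" using e by simp
      from Fc[unfolded continuous_on_iff, rule_format, of a, OF _ this] ab
      obtain da where da: "da > 0" "\<And>s. s \<in> {a..b} \<Longrightarrow> dist s a < da \<Longrightarrow> dist (f (\<gamma> s)) (f (\<gamma> a)) < e/2"
        by auto
      from Fc[unfolded continuous_on_iff, rule_format, of b, OF _ \<open>e/2 > 0\<close>] ab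
      obtain db where db: "db > 0" "\<And>s. s \<in> {a..b} \<Longrightarrow> dist s b < db \<Longrightarrow> dist (f (\<gamma> s)) (f (\<gamma> b)) < e/2"
        by auto
      define d where "d = min (min da db) (b - a) / 2"
      have mm: "0 < min (min da db) (b - a)" "min (min da db) (b - a) \<le> da"
        "min (min da db) (b - a) \<le> db" "min (min da db) (b - a) \<le> b - a" using da(1) db(1) ab by auto
      have d: "0 < d" "d < da" "d < db" "a + d < b" unfolding d_def using mm by linarith+
      define \<alpha> where "\<alpha> = \<Phi> (a + d)"
      have \<alpha>: "0 < \<alpha>" unfolding \<alpha>_def using strict[of a "a+d"] d \<Phi>a by simp
      define \<beta>' where "\<beta>' = L - \<Phi> (b - d)"
      have \<beta>': "0 < \<beta>'" unfolding \<beta>'_def L_def using strict[of "b-d" b] d by simp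
      define q where "q = min \<alpha> \<beta>'"
      have q: "0 < q" "q \<le> \<alpha>" "q \<le> \<beta>'" unfolding q_def using \<alpha> \<beta>' by auto
      obtain n :: nat where nq: "L / q < real n" using reals_Archimedean2 by blast
      have npos: "0 < real n" using nq Lpos q(1) by (smt (verit) divide_pos_pos)
      then have n1: "n \<ge> 1" by simp
      have Ln: "L / real n < q" using nq q(1) npos by (simp add: field_simps)
      from chain[OF n1] obtain s0 s1 where s: "s0 \<in> {a..b}" "s1 \<in> {a..b}" "\<Phi> s0 \<le> L / n"
        "L - L / n \<le> \<Phi> s1" "ennreal \<bar>f (\<gamma> s0) - f (\<gamma> s1)\<bar> \<le> ennreal (4*C0) * I" by blast
      have "s0 < a + d"
      proof (rule ccontr)
        assume "\<not> s0 < a + d"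
        then have "\<Phi> (a + d) \<le> \<Phi> s0" using mono[of "a+d" s0] s d by auto
        then show False using s(3) Ln q unfolding \<alpha>_def by linarith
      qed
      then have "dist s0 a < da" using s d by (simp add: dist_real_def)
      then have f0: "\<bar>f (\<gamma> s0) - f (\<gamma> a)\<bar> < e/2" using da(2)[OF s(1)] by (simp add: dist_real_def)
      have "s1 > b - d"
      proof (rule ccontr)
        assume "\<not> s1 > b - d"
        then have "\<Phi> s1 \<le> \<Phi> (b - d)" using mono[of s1 "b-d"] s d by auto
        then show False using s(4) Ln q unfolding \<beta>'_def by linarith
      qed
      then have "dist s1 b < db" using s d by (simp add: dist_real_def)
      then have f1: "\<bar>f (\<gamma> s1) - f (\<gamma> b)\<bar> < e/2" using db(2)[OF s(2)] by (simp add: dist_real_def)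
      have "ennreal \<bar>f (\<gamma> s0) - f (\<gamma> s1)\<bar> \<le> ennreal R" using s(5) RR by simp
      then have fm: "\<bar>f (\<gamma> s0) - f (\<gamma> s1)\<bar> \<le> R" using R0 by simp
      show "\<bar>f (\<gamma> a) - f (\<gamma> b)\<bar> \<le> R + e" using f0 f1 fm by linarith
    qed
    then have "ennreal \<bar>f (\<gamma> a) - f (\<gamma> b)\<bar> \<le> ennreal R" by (rule ennreal_leI)
    then show ?thesis using RR I_def by simp
  qed
qed

theorem lemma5p5:
  fixes M :: "'a::metric_space measure" and \<beta> :: real
    and \<Gamma> :: "'a rpath set" and f :: "'a \<Rightarrow> real" and g :: "'a \<Rightarrow> ennreal"
  assumes borel: "sets M = sets borel"
    and nonatomic: "\<And>x. emeasure M {x} = 0"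
    and beta: "\<beta> > 0"
    and sub: "\<Gamma> \<subseteq> Gamma_mu M"
    and closed: "closed_under_subpaths \<Gamma>"
    and ac: "arc_chord M \<beta> \<Gamma>"
    and fcont: "continuous_on UNIV f"
    and gmeas: "g \<in> borel_measurable M"
    and hyp: "\<And>x y. ennreal \<bar>f x - f y\<bar> \<le> ennreal (dist x y powr \<beta>) * (g x + g y)"
  shows "\<exists>C>0. upper_gradient M \<Gamma> f (\<lambda>x. ennreal C * g x)"
proof -
  from ac obtain C0 where C0: "C0 > 0"
    and acC: "\<forall>p\<in>\<Gamma>. ennreal (diameter (path_img p) powr \<beta>) \<le> ennreal C0 * emeasure M (path_img p)"
    unfolding arc_chord_def by blast
  show ?thesis
  proof (intro exI[of _ "4*C0"] conjI)
    show "4*C0 > 0" using C0 by simp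
    show "upper_gradient M \<Gamma> f (\<lambda>x. ennreal (4*C0) * g x)"
      unfolding upper_gradient_def
    proof
      fix p assume p: "p \<in> \<Gamma>"
      obtain a b \<gamma> where pe: "p = (a,b,\<gamma>)" by (cases p) auto
      have pG: "(a,b,\<gamma>) \<in> \<Gamma>" using p pe by simp
      have bnd: "ennreal \<bar>f (\<gamma> a) - f (\<gamma> b)\<bar> \<le> ennreal (4*C0) * set_nn_integral M (\<gamma>`{a..b}) g"
        by (rule path_bound[OF borel nonatomic beta sub closed C0 acC fcont gmeas hyp pG])
      have "continuous_on {a..b} \<gamma>" using pG sub unfolding Gamma_mu_def by auto
      then have "compact (\<gamma>`{a..b})" by (intro compact_continuous_image) auto
      then have "closed (\<gamma>`{a..b})" by (rule compact_imp_closed)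
      then have S: "\<gamma>`{a..b} \<in> sets M" unfolding borel by (rule borel_closed)
      have "path_int M p (\<lambda>x. ennreal (4*C0) * g x)
          = (\<integral>\<^sup>+x. ennreal (4*C0) * (g x * indicator (\<gamma>`{a..b}) x) \<partial>M)"
        unfolding path_int_def pe path_img_def by (simp add: mult.assoc)
      also have "\<dots> = ennreal (4*C0) * set_nn_integral M (\<gamma>`{a..b}) g"
        by (rule nn_integral_cmult) (use S gmeas in measurable)
      finally have "path_int M p (\<lambda>x. ennreal (4*C0) * g x) = ennreal (4*C0) * set_nn_integral M (\<gamma>`{a..b}) g" .
      then show "ennreal \<bar>f (path_start p) - f (path_end p)\<bar> \<le> path_int M p (\<lambda>x. ennreal (4*C0) * g x)"
        using bnd by (simp add: pe path_start_def path_end_def)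
    qed
  qed
qed

end
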